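(* Let $\varphi$ and $\omega$ be Schwarz-type functions, let $F=\ell\circ\omega$, and suppose $T_{F,\varphi}(f)\in\mathcal{P}$ for every $f\in\mathcal{P}$ and that $\varphi$ is not a rotation. Then $T_{F,\varphi}$ has a unique fixed point $G$ in $\mathcal{P}$, and for every $f\in\mathcal{P}$ the iterates $T_{F,\varphi}^n f$ converge to $G$ uniformly on compact subsets of $\mathbb{D}$ as $n\to\infty$. If moreover $\varphi$ is inner (and not a rotation), this unique fixed point is the constant function $1$.
   Context: $\mathbb{D}$ is the open unit disk. $\mathcal{P}$ is the set of analytic $f$ on $\mathbb{D}$ with $\mathrm{Re}\,f>0$ and $f(0)=1$. A Schwarz-type function is an analytic $\varphi:\mathbb{D}\to\mathbb{D}$ with $\varphi(0)=0$. A rotation is a map $z\mapsto\lambda z$ with $|\lambda|=1$. $\ell(z)=\frac{1+z}{1-z}$. $T_{F,\varphi}(f)=F\cdot(f\circ\varphi)$, and $T^n_{F,\varphi}$ is its $n$-th iterate. An inner function is a bounded analytic function on $\mathbb{D}$ with $|\varphi|\le1$ whose radial limits have modulus one almost everywhere on the unit circle. *)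

theory Defs
  imports "HOL-Analysis.Analysis"
begin

definition unit_disk :: "complex set" where
  "unit_disk = ball 0 1"

text \<open>The Caratheodory class: analytic on the disk, positive real part, normalised at 0.
  Functions are total on complex; only their values on the disk matter.\<close>
definition caratheodory :: "(complex \<Rightarrow> complex) set" where
  "caratheodory = {f. f holomorphic_on unit_disk \<and> (\<forall>z\<in>unit_disk. Re (f z) > 0) \<and> f 0 = 1}"

definition schwarz_type :: "(complex \<Rightarrow> complex) \<Rightarrow> bool" where
  "schwarz_type \<phi> \<longleftrightarrow> \<phi> holomorphic_on unit_disk \<and> \<phi> ` unit_disk \<subseteq> unit_disk \<and> \<phi> 0 = 0"

definition is_rotation :: "(complex \<Rightarrow> complex) \<Rightarrow> bool" where
  "is_rotation \<phi> \<longleftrightarrow> (\<exists>c. norm c = 1 \<and> (\<forall>z\<in>unit_disk. \<phi> z = c * z))"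

definition ell :: "complex \<Rightarrow> complex" where
  "ell z = (1 + z) / (1 - z)"

definition T_op :: "(complex \<Rightarrow> complex) \<Rightarrow> (complex \<Rightarrow> complex) \<Rightarrow> (complex \<Rightarrow> complex) \<Rightarrow> (complex \<Rightarrow> complex)" where
  "T_op F \<phi> f = (\<lambda>z. F z * f (\<phi> z))"

definition inner_function :: "(complex \<Rightarrow> complex) \<Rightarrow> bool" where
  "inner_function \<phi> \<longleftrightarrow> \<phi> holomorphic_on unit_disk \<and> (\<forall>z\<in>unit_disk. norm (\<phi> z) \<le> 1) \<and>
     (AE \<theta> in lborel. \<theta> \<in> {0..2*pi} \<longrightarrow>
        (\<exists>L. ((\<lambda>r::real. \<phi> (complex_of_real r * cis \<theta>)) \<longlongrightarrow> L) (at_left 1) \<and> norm L = 1))"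

end

theory Submission
  imports Defs "HOL-Complex_Analysis.Complex_Analysis"
begin

lemma ell_Re: "Re (ell w) = (1 - (cmod w)^2) / (cmod (1 - w))^2"
proof -
  have "Re (1+w) * Re (1-w) + Im (1+w) * Im (1-w) = 1 - ((Re w)^2 + (Im w)^2)"
    by (simp add: algebra_simps power2_eq_square)
  then show ?thesis unfolding ell_def Re_divide cmod_power2 by simp
qed

lemma ell_Im: "Im (ell w) = 2 * Im w / (cmod (1 - w))^2"
proof -
  have "Im (1+w) * Re (1-w) - Re (1+w) * Im (1-w) = 2 * Im w"
    by (simp add: algebra_simps)
  then show ?thesis unfolding ell_def Im_divide cmod_power2 by simp
qed

lemma norm_lt_Re: fixes a :: complex assumes "Re a > 0" shows "cmod (a - 1) < cmod (a + 1)"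
proof -
  have "(Re a - 1)^2 + (Im a)^2 < (Re a + 1)^2 + (Im a)^2" using assms by (simp add: power2_eq_square algebra_simps)
  then show ?thesis unfolding cmod_def by (simp add: real_sqrt_less_mono)
qed

lemma carath_schwarz:
  assumes f: "f \<in> caratheodory" and w: "cmod w < 1"
  shows "cmod ((f w - 1) / (f w + 1)) \<le> cmod w"
proof -
  define g where "g = (\<lambda>w. (f w - 1) / (f w + 1))"
  have nz: "f z + 1 \<noteq> 0" if "z \<in> ball 0 1" for z
  proof
    assume "f z + 1 = 0" then have "Re (f z) = -1" by (metis add_eq_0_iff2 uminus_complex.sel(1) one_complex.sel(1))
    with f that show False by (force simp: caratheodory_def unit_disk_def)
  qed
  have hol: "g holomorphic_on ball 0 1" unfolding g_def using f nz
    by (auto intro!: holomorphic_intros simp: caratheodory_def unit_disk_def)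
  have g0: "g 0 = 0" using f by (simp add: g_def caratheodory_def)
  have lt: "cmod (g z) < 1" if "cmod z < 1" for z
  proof -
    have "Re (f z) > 0" using f that by (auto simp: caratheodory_def unit_disk_def)
    then have "cmod (f z - 1) < cmod (f z + 1)" by (rule norm_lt_Re)
    then show ?thesis by (simp add: g_def norm_divide divide_less_eq)
  qed
  show ?thesis using Schwarz_Lemma(1)[OF hol g0 lt w] by (simp add: g_def)
qed


lemma carath_repr:
  assumes f: "f \<in> caratheodory" and w: "cmod w < 1"
  shows "\<exists>g. cmod g \<le> cmod w \<and> f w = ell g"
proof -
  define g where "g = (f w - 1) / (f w + 1)"
  have gw: "cmod g \<le> cmod w" using carath_schwarz[OF f w] by (simp add: g_def)
  have "Re (f w) > 0" using f w by (force simp: caratheodory_def unit_disk_def)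
  then have nz: "f w + 1 \<noteq> 0"
  proof -
    assume r: "Re (f w) > 0"
    show ?thesis
    proof
      assume "f w + 1 = 0" then have "f w = -1" by (simp add: add_eq_0_iff2)
      with r show False by simp
    qed
  qed
  have g1: "1 - g \<noteq> 0" using gw w by auto
  have "f w * (1 - g) = 1 + g" using nz unfolding g_def by (simp add: field_simps)
  then have "f w = ell g" using g1 unfolding ell_def by (simp add: field_simps)
  with gw show ?thesis by blast
qed

lemma ell_minus1_bound:
  assumes "cmod g \<le> s" "s < 1"
  shows "cmod (ell g - 1) \<le> 2 * s / (1 - s)"
proof -
  have g1: "1 - g \<noteq> 0" using assms by auto
  have eq: "ell g - 1 = 2 * g / (1 - g)" using g1 unfolding ell_def by (simp add: field_simps)
  have "1 - s \<le> cmod (1 - g)" using assms norm_triangle_ineq2[of 1 g] by simp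
  moreover have "1 - s > 0" using assms by simp
  moreover have "0 \<le> s" using assms(1) norm_ge_zero[of g] by linarith
  ultimately have "cmod (2 * g / (1 - g)) \<le> 2 * s / (1 - s)"
    unfolding norm_divide norm_mult using assms
    by (intro frac_le) auto
  with eq show ?thesis by simp
qed

lemma ell_Re_lower:
  assumes "cmod g \<le> s" "s < 1"
  shows "Re (ell g) \<ge> (1 - s) / (1 + s)"
proof -
  have g1: "1 - g \<noteq> 0" using assms by auto
  have n0: "0 \<le> cmod g" by simp
  have d: "cmod (1 - g) \<le> 1 + cmod g" using norm_triangle_ineq4[of 1 g] by simp
  have dpos: "cmod (1 - g) > 0" using g1 by simp
  have "(1 - s) * (1 + cmod g) \<le> (1 - cmod g) * (1 + s)"
    using assms by (simp add: algebra_simps)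
  moreover have "1 + s > 0" "1 + cmod g > 0" using assms n0 by linarith+
  ultimately have "(1 - s) / (1 + s) \<le> (1 - cmod g) / (1 + cmod g)"
    by (simp add: divide_simps)
  also have "\<dots> = (1 - (cmod g)^2) / (1 + cmod g)^2"
    by (simp add: power2_eq_square divide_simps) (simp add: algebra_simps)
  also have "\<dots> \<le> (1 - (cmod g)^2) / (cmod (1 - g))^2"
  proof (rule divide_left_mono)
    have "cmod g \<le> 1" using assms by simp
    then have "(cmod g)^2 \<le> 1" using n0 by (simp add: power_le_one)
    then show "0 \<le> 1 - (cmod g)^2" by simp
    show "(cmod (1 - g))^2 \<le> (1 + cmod g)^2" using d dpos by (intro power_mono) auto
    have "1 + cmod g > 0" using n0 by linarith
    then show "0 < (1 + cmod g)^2 * (cmod (1 - g))^2" using dpos by simp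
  qed
  finally show ?thesis by (simp add: ell_Re)
qed

lemma carath_bounds:
  assumes f: "f \<in> caratheodory" and w: "cmod w \<le> s" "s < 1"
  shows "cmod (f w - 1) \<le> 2 * s / (1 - s)" "cmod (f w) \<le> (1 + s) / (1 - s)"
    "Re (f w) \<ge> (1 - s) / (1 + s)"
proof -
  obtain g where g: "cmod g \<le> cmod w" "f w = ell g" using carath_repr[OF f] w by force
  have gs: "cmod g \<le> s" using g w by simp
  show 1: "cmod (f w - 1) \<le> 2 * s / (1 - s)" using ell_minus1_bound[OF gs w(2)] g by simp
  have "cmod (f w) \<le> 1 + cmod (f w - 1)" using norm_triangle_ineq2[of "f w" 1] by simp
  also have "\<dots> \<le> 1 + 2 * s / (1 - s)" using 1 by simp
  also have "\<dots> = (1 + s) / (1 - s)" using w by (simp add: field_simps)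
  finally show "cmod (f w) \<le> (1 + s) / (1 - s)" .
  show "Re (f w) \<ge> (1 - s) / (1 + s)" using ell_Re_lower[OF gs w(2)] g by simp
qed

lemma one_carath: "(\<lambda>_. 1) \<in> caratheodory"
  by (simp add: caratheodory_def)

lemma iter_carath:
  assumes "\<forall>f\<in>caratheodory. T_op F \<phi> f \<in> caratheodory" "h \<in> caratheodory"
  shows "(T_op F \<phi> ^^ n) h \<in> caratheodory"
  using assms by (induction n) auto

lemma iter_formula:
  "(T_op F \<phi> ^^ n) h z = (T_op F \<phi> ^^ n) (\<lambda>_. 1) z * h ((\<phi> ^^ n) z)"
proof (induction n arbitrary: z)
  case 0 then show ?case by simp
next
  case (Suc n)
  have "(T_op F \<phi> ^^ Suc n) h z = F z * (T_op F \<phi> ^^ n) h (\<phi> z)"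
    by (simp add: T_op_def)
  also have "\<dots> = F z * ((T_op F \<phi> ^^ n) (\<lambda>_. 1) (\<phi> z) * h ((\<phi> ^^ n) (\<phi> z)))"
    using Suc by simp
  also have "(\<phi> ^^ n) (\<phi> z) = (\<phi> ^^ Suc n) z"
    by (metis comp_apply funpow_Suc_right)
  also have "F z * ((T_op F \<phi> ^^ n) (\<lambda>_. 1) (\<phi> z) * h ((\<phi> ^^ Suc n) z))
     = (T_op F \<phi> ^^ Suc n) (\<lambda>_. 1) z * h ((\<phi> ^^ Suc n) z)"
    by (simp add: T_op_def)
  finally show ?case .
qed

lemma schwarz_strict:
  assumes "schwarz_type \<phi>" "\<not> is_rotation \<phi>" "cmod z < 1" "z \<noteq> 0"
  shows "cmod (\<phi> z) < cmod z"
proof -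
  have hol: "\<phi> holomorphic_on ball 0 1" and p0: "\<phi> 0 = 0"
    using assms(1) by (auto simp: schwarz_type_def unit_disk_def)
  have lt: "cmod (\<phi> w) < 1" if "cmod w < 1" for w
    using assms(1) that unfolding schwarz_type_def unit_disk_def by (auto simp: image_subset_iff)
  have le: "cmod (\<phi> z) \<le> cmod z" using Schwarz_Lemma(1)[OF hol p0 lt assms(3)] by blast
  have "cmod (\<phi> z) \<noteq> cmod z"
  proof
    assume "cmod (\<phi> z) = cmod z"
    then obtain \<alpha> where "\<forall>w. cmod w < 1 \<longrightarrow> \<phi> w = \<alpha> * w" "cmod \<alpha> = 1"
      using Schwarz_Lemma(3)[OF hol p0 lt assms(3)] assms(3,4) by blast
    then have "is_rotation \<phi>" by (auto simp: is_rotation_def unit_disk_def)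
    with assms(2) show False by blast
  qed
  with le show ?thesis by simp
qed

lemma schwarz_contract:
  assumes st: "schwarz_type \<phi>" and nr: "\<not> is_rotation \<phi>" and R: "0 < R" "R < 1"
  obtains c where "0 \<le> c" "c < 1" "\<And>z. cmod z < R \<Longrightarrow> cmod (\<phi> z) \<le> c * cmod z"
proof -
  have hol: "\<phi> holomorphic_on ball 0 1" and p0: "\<phi> 0 = 0"
    using st by (auto simp: schwarz_type_def unit_disk_def)
  have "continuous_on (cball 0 R) (\<lambda>z. cmod (\<phi> z))"
    using hol R by (intro continuous_intros holomorphic_on_imp_continuous_on) (auto elim: holomorphic_on_subset)
  then obtain x0 where x0: "x0 \<in> cball 0 R" "\<And>y. y \<in> cball 0 R \<Longrightarrow> cmod (\<phi> y) \<le> cmod (\<phi> x0)"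
    using continuous_attains_sup[of "cball 0 R" "\<lambda>z. cmod (\<phi> z)"] R by fastforce
  define M where "M = cmod (\<phi> x0)"
  have MR: "M < R"
  proof (cases "x0 = 0")
    case True then show ?thesis using p0 R by (simp add: M_def)
  next
    case False
    have "cmod x0 < 1" using x0 R by simp
    then have "cmod (\<phi> x0) < cmod x0" using schwarz_strict[OF st nr _ False] by blast
    then show ?thesis using x0 by (simp add: M_def)
  qed
  have M0: "0 \<le> M" by (simp add: M_def)
  define M' where "M' = (M + R) / 2"
  have M'pos: "M' > 0" "M < M'" "M' < R" using MR M0 R by (auto simp: M'_def)
  define \<psi> where "\<psi> = (\<lambda>w. \<phi> (of_real R * w) / of_real M')"
  have sub: "(\<lambda>w::complex. of_real R * w) ` ball 0 1 \<subseteq> ball 0 1"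
  proof (rule image_subsetI)
    fix w :: complex assume "w \<in> ball 0 1"
    then have w: "cmod w < 1" by simp
    have "R * cmod w \<le> 1 * cmod w" by (rule mult_right_mono) (use R in auto)
    then show "of_real R * w \<in> ball 0 1" using w R by (simp add: norm_mult)
  qed
  have hol\<psi>: "\<psi> holomorphic_on ball 0 1"
  proof -
    have "(\<phi> \<circ> (\<lambda>w. of_real R * w)) holomorphic_on ball 0 1"
      by (rule holomorphic_on_compose) (auto intro!: holomorphic_intros holomorphic_on_subset[OF hol sub])
    then show ?thesis unfolding \<psi>_def o_def by (intro holomorphic_intros) auto
  qed
  have \<psi>0: "\<psi> 0 = 0" by (simp add: \<psi>_def p0)
  have \<psi>lt: "cmod (\<psi> w) < 1" if "cmod w < 1" for w
  proof -
    have "R * cmod w \<le> R * 1" by (rule mult_left_mono) (use R that in auto)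
    then have "of_real R * w \<in> cball 0 R" using R by (simp add: norm_mult)
    then have "cmod (\<phi> (of_real R * w)) \<le> M" using x0 by (simp add: M_def)
    then show ?thesis using M'pos by (simp add: \<psi>_def norm_divide divide_less_eq)
  qed
  show ?thesis
  proof
    show "0 \<le> M' / R" using M'pos R by simp
    show "M' / R < 1" using M'pos R by simp
    fix z :: complex assume z: "cmod z < R"
    have "cmod (z / of_real R) < 1" using z R by (simp add: norm_divide divide_less_eq)
    from Schwarz_Lemma(1)[OF hol\<psi> \<psi>0 \<psi>lt this]
    have "cmod (\<phi> z) / M' \<le> cmod z / R" using R M'pos by (simp add: \<psi>_def norm_divide)
    then show "cmod (\<phi> z) \<le> M' / R * cmod z" using R M'pos by (simp add: divide_simps mult.commute)
  qed
qed

lemma iter_contract: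
  assumes c: "0 \<le> c" "c < 1" and contr: "\<And>z. cmod z < R \<Longrightarrow> cmod (\<phi> z) \<le> c * cmod z"
    and z: "cmod z < R"
  shows "cmod ((\<phi> ^^ n) z) \<le> c ^ n * cmod z"
proof (induction n)
  case 0 then show ?case by simp
next
  case (Suc n)
  have "c ^ n \<le> 1" using c by (simp add: power_le_one)
  then have "c ^ n * cmod z \<le> cmod z" using norm_ge_zero[of z] mult_right_mono[of "c^n" 1 "cmod z"] by simp
  then have "cmod ((\<phi> ^^ n) z) < R" using Suc z by linarith
  then have "cmod ((\<phi> ^^ Suc n) z) \<le> c * cmod ((\<phi> ^^ n) z)" using contr by simp
  also have "\<dots> \<le> c * (c ^ n * cmod z)" using Suc c by (simp add: mult_left_mono)
  finally show ?case by simp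
qed

lemma key_bound:
  assumes TP: "\<forall>f\<in>caratheodory. T_op F \<phi> f \<in> caratheodory" and st: "schwarz_type \<phi>"
    and nr: "\<not> is_rotation \<phi>" and R: "0 < R" "R < 1"
  obtains c B where "0 \<le> c" "c < 1" "0 \<le> B"
    "\<And>h n z. h \<in> caratheodory \<Longrightarrow> cmod z < R \<Longrightarrow>
        cmod ((T_op F \<phi> ^^ n) h z - (T_op F \<phi> ^^ n) (\<lambda>_. 1) z) \<le> B * c ^ n"
proof -
  obtain c where c: "0 \<le> c" "c < 1" "\<And>z. cmod z < R \<Longrightarrow> cmod (\<phi> z) \<le> c * cmod z"
    using schwarz_contract[OF st nr R] by blast
  define B where "B = (1 + R) / (1 - R) * (2 / (1 - R))"
  have B0: "0 \<le> B" using R by (simp add: B_def)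
  show ?thesis
  proof (rule that[OF c(1,2) B0])
    fix h n z assume h: "h \<in> caratheodory" and z: "cmod z < R"
    define P1 where "P1 = (T_op F \<phi> ^^ n) (\<lambda>_. 1)"
    define w where "w = (\<phi> ^^ n) z"
    have P1c: "P1 \<in> caratheodory" unfolding P1_def by (rule iter_carath[OF TP one_carath])
    have cn: "c ^ n \<le> 1" "0 \<le> c ^ n" using c by (auto simp: power_le_one)
    have wle: "cmod w \<le> c ^ n * cmod z" unfolding w_def by (rule iter_contract[OF c z])
    define s where "s = c ^ n * R"
    have "c ^ n * cmod z \<le> c ^ n * R" using z cn by (intro mult_left_mono) auto
    then have ws: "cmod w \<le> s" using wle by (simp add: s_def)
    have sR: "s \<le> R" "0 \<le> s" "s \<le> c ^ n" using cn R
      by (auto simp: s_def mult_left_le_one_le mult_right_le_one_le)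
    have s1: "s < 1" using sR R by simp
    have "cmod (h w - 1) \<le> 2 * s / (1 - s)" using carath_bounds(1)[OF h ws s1] .
    also have "\<dots> \<le> 2 * c ^ n / (1 - R)"
      using sR R by (intro frac_le) auto
    finally have hb: "cmod (h w - 1) \<le> 2 * c ^ n / (1 - R)" .
    have pb: "cmod (P1 z) \<le> (1 + R) / (1 - R)"
      using carath_bounds(2)[OF P1c _ R(2), of z] z by simp
    have "(T_op F \<phi> ^^ n) h z - P1 z = P1 z * (h w - 1)"
      using iter_formula[of n F \<phi> h z] by (simp add: P1_def w_def algebra_simps)
    then have "cmod ((T_op F \<phi> ^^ n) h z - P1 z) = cmod (P1 z) * cmod (h w - 1)"
      by (simp add: norm_mult)
    also have "\<dots> \<le> (1 + R) / (1 - R) * (2 * c ^ n / (1 - R))"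
      using pb hb R by (intro mult_mono) auto
    also have "\<dots> = B * c ^ n" by (simp add: B_def)
    finally show "cmod ((T_op F \<phi> ^^ n) h z - (T_op F \<phi> ^^ n) (\<lambda>_. 1) z) \<le> B * c ^ n"
      by (simp add: P1_def)
  qed
qed

lemma compact_in_disk_radius:
  assumes "compact K" "K \<subseteq> unit_disk"
  obtains R where "0 < R" "R < 1" "\<And>z. z \<in> K \<Longrightarrow> cmod z < R"
proof (cases "K = {}")
  case True
  show ?thesis by (rule that[of "1/2"]) (use True in auto)
next
  case False
  obtain x1 where x1: "x1 \<in> K" "\<And>y. y \<in> K \<Longrightarrow> norm y \<le> norm x1"
    using continuous_attains_sup[OF assms(1) False, of norm] by (auto intro: continuous_intros)
  have "norm x1 < 1" using x1 assms(2) by (auto simp: unit_disk_def)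
  show ?thesis
  proof (rule that[of "(norm x1 + 1) / 2"])
    show "0 < (norm x1 + 1) / 2" by (simp add: add_nonneg_pos)
    show "(norm x1 + 1) / 2 < 1" using \<open>norm x1 < 1\<close> by simp
    fix z assume "z \<in> K" then show "cmod z < (norm x1 + 1) / 2" using x1 \<open>norm x1 < 1\<close> by fastforce
  qed
qed

lemma conv_main:
  assumes TP: "\<forall>f\<in>caratheodory. T_op F \<phi> f \<in> caratheodory" and st: "schwarz_type \<phi>"
    and nr: "\<not> is_rotation \<phi>" and K: "compact K" "K \<subseteq> unit_disk"
  obtains c B where "0 \<le> c" "c < 1" "0 \<le> B"
    "\<And>z. z \<in> K \<Longrightarrow> (\<lambda>n. (T_op F \<phi> ^^ n) (\<lambda>_. 1) z) \<longlonglongrightarrow> lim (\<lambda>n. (T_op F \<phi> ^^ n) (\<lambda>_. 1) z)"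
    "\<And>z h n. z \<in> K \<Longrightarrow> h \<in> caratheodory \<Longrightarrow>
       cmod ((T_op F \<phi> ^^ n) h z - lim (\<lambda>m. (T_op F \<phi> ^^ m) (\<lambda>_. 1) z)) \<le> 2 * B * c ^ n"
proof -
  define T where "T = T_op F \<phi>"
  obtain R where R: "0 < R" "R < 1" "\<And>z. z \<in> K \<Longrightarrow> cmod z < R"
    using compact_in_disk_radius[OF K] by blast
  obtain c B where cB: "0 \<le> c" "c < 1" "0 \<le> B"
    and bnd: "\<And>h n z. h \<in> caratheodory \<Longrightarrow> cmod z < R \<Longrightarrow>
        cmod ((T ^^ n) h z - (T ^^ n) (\<lambda>_. 1) z) \<le> B * c ^ n"
    using key_bound[OF TP st nr R(1,2)] unfolding T_def by blast
  have cmono: "B * c ^ m \<le> B * c ^ n" if "n \<le> m" for m n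
    using cB that by (intro mult_left_mono power_decreasing) auto
  have Bc0: "(\<lambda>n. B * c ^ n) \<longlonglongrightarrow> 0"
    using LIMSEQ_realpow_zero[OF cB(1,2)] by (intro tendsto_mult_right_zero)
  have diffb: "cmod ((T ^^ m) (\<lambda>_. 1) z - (T ^^ n) (\<lambda>_. 1) z) \<le> B * c ^ n"
    if z: "z \<in> K" and nm: "n \<le> m" for z m n
  proof -
    obtain k where m: "m = n + k" using nm le_Suc_ex by blast
    have "(T ^^ m) (\<lambda>_. 1) = (T ^^ n) ((T ^^ k) (\<lambda>_. 1))" by (simp add: m funpow_add)
    moreover have "(T ^^ k) (\<lambda>_. 1) \<in> caratheodory"
      unfolding T_def by (rule iter_carath[OF TP one_carath])
    ultimately show ?thesis using bnd[of "(T ^^ k) (\<lambda>_. 1)" z n] R(3)[OF z] by simp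
  qed
  have conv: "(\<lambda>n. (T ^^ n) (\<lambda>_. 1) z) \<longlonglongrightarrow> lim (\<lambda>n. (T ^^ n) (\<lambda>_. 1) z)" if z: "z \<in> K" for z
  proof -
    have "Cauchy (\<lambda>n. (T ^^ n) (\<lambda>_. 1) z)"
    proof (rule CauchyI)
      fix e :: real assume e: "0 < e"
      from order_tendstoD(2)[OF Bc0 e] obtain M where M: "\<And>n. n \<ge> M \<Longrightarrow> B * c ^ n < e"
        by (auto simp: eventually_sequentially)
      show "\<exists>M. \<forall>m\<ge>M. \<forall>n\<ge>M. norm ((T ^^ m) (\<lambda>_. 1) z - (T ^^ n) (\<lambda>_. 1) z) < e"
      proof (intro exI allI impI)
        fix m n assume mn: "M \<le> m" "M \<le> n"
        show "norm ((T ^^ m) (\<lambda>_. 1) z - (T ^^ n) (\<lambda>_. 1) z) < e"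
        proof (cases "n \<le> m")
          case True
          then show ?thesis using diffb[OF z True] M[OF mn(2)] by linarith
        next
          case False
          then have "norm ((T ^^ n) (\<lambda>_. 1) z - (T ^^ m) (\<lambda>_. 1) z) < e"
            using diffb[OF z, of m n] M[OF mn(1)] by linarith
          then show ?thesis by (simp add: norm_minus_commute)
        qed
      qed
    qed
    then show ?thesis using Cauchy_convergent_iff convergent_LIMSEQ_iff by blast
  qed
  have limb: "cmod ((T ^^ n) (\<lambda>_. 1) z - lim (\<lambda>m. (T ^^ m) (\<lambda>_. 1) z)) \<le> B * c ^ n"
    if z: "z \<in> K" for z n
  proof -
    define L where "L = lim (\<lambda>m. (T ^^ m) (\<lambda>_. 1) z)"
    have "(\<lambda>k. (T ^^ (k + n)) (\<lambda>_. 1) z) \<longlonglongrightarrow> L"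
      using LIMSEQ_ignore_initial_segment[OF conv[OF z]] by (simp add: L_def)
    then have "(\<lambda>k. cmod ((T ^^ (k + n)) (\<lambda>_. 1) z - (T ^^ n) (\<lambda>_. 1) z)) \<longlonglongrightarrow> cmod (L - (T ^^ n) (\<lambda>_. 1) z)"
      by (intro tendsto_intros)
    moreover have "\<forall>k\<ge>0. cmod ((T ^^ (k + n)) (\<lambda>_. 1) z - (T ^^ n) (\<lambda>_. 1) z) \<le> B * c ^ n"
      using diffb[OF z] by simp
    ultimately have "cmod (L - (T ^^ n) (\<lambda>_. 1) z) \<le> B * c ^ n"
      by (intro LIMSEQ_le_const2) blast+
    then show ?thesis by (simp add: L_def norm_minus_commute)
  qed
  show ?thesis
  proof (rule that[OF cB])
    show "\<And>z. z \<in> K \<Longrightarrow> (\<lambda>n. (T_op F \<phi> ^^ n) (\<lambda>_. 1) z) \<longlonglongrightarrow> lim (\<lambda>n. (T_op F \<phi> ^^ n) (\<lambda>_. 1) z)"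
      using conv unfolding T_def by blast
    fix z h n assume z: "z \<in> K" and h: "h \<in> caratheodory"
    have "cmod ((T ^^ n) h z - lim (\<lambda>m. (T ^^ m) (\<lambda>_. 1) z))
       \<le> cmod ((T ^^ n) h z - (T ^^ n) (\<lambda>_. 1) z) + cmod ((T ^^ n) (\<lambda>_. 1) z - lim (\<lambda>m. (T ^^ m) (\<lambda>_. 1) z))"
      by (rule norm_diff_triangle_le[of _ "(T ^^ n) (\<lambda>_. 1) z"]) simp_all
    also have "\<dots> \<le> B * c ^ n + B * c ^ n"
      using bnd[OF h R(3)[OF z]] limb[OF z] by (intro add_mono)
    finally show "cmod ((T_op F \<phi> ^^ n) h z - lim (\<lambda>m. (T_op F \<phi> ^^ m) (\<lambda>_. 1) z)) \<le> 2 * B * c ^ n"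
      unfolding T_def by simp
  qed
qed

lemma conv_uniform:
  assumes TP: "\<forall>f\<in>caratheodory. T_op F \<phi> f \<in> caratheodory" and st: "schwarz_type \<phi>"
    and nr: "\<not> is_rotation \<phi>" and K: "compact K" "K \<subseteq> unit_disk" and h: "h \<in> caratheodory"
  shows "uniform_limit K (\<lambda>n. (T_op F \<phi> ^^ n) h) (\<lambda>z. lim (\<lambda>m. (T_op F \<phi> ^^ m) (\<lambda>_. 1) z)) sequentially"
proof -
  obtain c B where cB: "0 \<le> c" "c < 1" "0 \<le> B"
    and "\<And>z. z \<in> K \<Longrightarrow> (\<lambda>n. (T_op F \<phi> ^^ n) (\<lambda>_. 1) z) \<longlonglongrightarrow> lim (\<lambda>n. (T_op F \<phi> ^^ n) (\<lambda>_. 1) z)"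
    and b: "\<And>z h n. z \<in> K \<Longrightarrow> h \<in> caratheodory \<Longrightarrow>
       cmod ((T_op F \<phi> ^^ n) h z - lim (\<lambda>m. (T_op F \<phi> ^^ m) (\<lambda>_. 1) z)) \<le> 2 * B * c ^ n"
    using conv_main[OF TP st nr K] by metis
  have lim0: "(\<lambda>n. 2 * B * c ^ n) \<longlonglongrightarrow> 0"
    using LIMSEQ_realpow_zero[OF cB(1,2)] by (intro tendsto_mult_right_zero)
  show ?thesis
  proof (rule uniform_limitI)
    fix e :: real assume e: "0 < e"
    have ev: "\<forall>\<^sub>F n in sequentially. 2 * B * c ^ n < e" by (rule order_tendstoD(2)[OF lim0 e])
    show "\<forall>\<^sub>F n in sequentially. \<forall>x\<in>K.
        dist ((T_op F \<phi> ^^ n) h x) (lim (\<lambda>m. (T_op F \<phi> ^^ m) (\<lambda>_. 1) x)) < e"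
    proof (rule eventually_mono[OF ev], intro ballI)
      fix n x assume n: "2 * B * c ^ n < e" and x: "x \<in> K"
      have "cmod ((T_op F \<phi> ^^ n) h x - lim (\<lambda>m. (T_op F \<phi> ^^ m) (\<lambda>_. 1) x)) \<le> 2 * B * c ^ n"
        by (rule b[OF x h])
      with n show "dist ((T_op F \<phi> ^^ n) h x) (lim (\<lambda>m. (T_op F \<phi> ^^ m) (\<lambda>_. 1) x)) < e"
        by (simp add: dist_norm)
    qed
  qed
qed

lemma main_part:
  assumes TP: "\<forall>f\<in>caratheodory. T_op F \<phi> f \<in> caratheodory" and st: "schwarz_type \<phi>"
    and nr: "\<not> is_rotation \<phi>"
  defines "G \<equiv> (\<lambda>z. lim (\<lambda>m. (T_op F \<phi> ^^ m) (\<lambda>_. 1) z))"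
  shows "G \<in> caratheodory"
    "\<forall>z\<in>unit_disk. T_op F \<phi> G z = G z"
    "\<forall>H\<in>caratheodory. (\<forall>z\<in>unit_disk. T_op F \<phi> H z = H z) \<longrightarrow> (\<forall>z\<in>unit_disk. H z = G z)"
    "\<forall>f\<in>caratheodory. \<forall>K. compact K \<and> K \<subseteq> unit_disk \<longrightarrow>
              uniform_limit K (\<lambda>n. (T_op F \<phi> ^^ n) f) G sequentially"
proof -
  define T where "T = T_op F \<phi>"
  have unif: "uniform_limit K (\<lambda>n. (T ^^ n) h) G sequentially"
    if "compact K" "K \<subseteq> unit_disk" "h \<in> caratheodory" for K h
    using conv_uniform[OF TP st nr that] unfolding T_def G_def by simp
  show "\<forall>f\<in>caratheodory. \<forall>K. compact K \<and> K \<subseteq> unit_disk \<longrightarrow>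
              uniform_limit K (\<lambda>n. (T_op F \<phi> ^^ n) f) G sequentially"
    using unif unfolding T_def by blast
  have pt: "(\<lambda>n. (T ^^ n) h z) \<longlonglongrightarrow> G z" if "z \<in> unit_disk" "h \<in> caratheodory" for z h
  proof -
    have "uniform_limit {z} (\<lambda>n. (T ^^ n) h) G sequentially"
      using unif[of "{z}" h] that by simp
    then show ?thesis by (rule tendsto_uniform_limitI) simp
  qed
  have Tc: "(T ^^ n) h \<in> caratheodory" if "h \<in> caratheodory" for n h
    unfolding T_def by (rule iter_carath[OF TP that])
  have hol: "G holomorphic_on ball 0 1"
  proof (rule holomorphic_uniform_sequence[where f = "\<lambda>n. (T ^^ n) (\<lambda>_. 1)"])
    show "open (ball (0::complex) 1)" by simp
    show "(T ^^ n) (\<lambda>_. 1) holomorphic_on ball 0 1" for n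
      using Tc[OF one_carath, of n] by (simp add: caratheodory_def unit_disk_def)
    fix x :: complex assume x: "x \<in> ball 0 1"
    define d where "d = (1 - norm x) / 2"
    have x1: "cmod x < 1" using x by simp
    have d: "0 < d" "cball x d \<subseteq> ball 0 1"
      using x1 by (auto simp: d_def cball_subset_ball_iff dist_norm field_simps)
    have "uniform_limit (cball x d) (\<lambda>n. (T ^^ n) (\<lambda>_. 1)) G sequentially"
      using d by (intro unif one_carath) (auto simp: unit_disk_def)
    with d show "\<exists>d>0. cball x d \<subseteq> ball 0 1 \<and> uniform_limit (cball x d) (\<lambda>n. (T ^^ n) (\<lambda>_. 1)) G sequentially"
      by blast
  qed
  have Re_pos: "Re (G z) > 0" if z: "z \<in> unit_disk" for z
  proof -
    have z1: "cmod z < 1" using z by (simp add: unit_disk_def)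
    have "(\<lambda>n. Re ((T ^^ n) (\<lambda>_. 1) z)) \<longlonglongrightarrow> Re (G z)"
      by (intro tendsto_Re pt z one_carath)
    moreover have "\<forall>n\<ge>0. (1 - cmod z) / (1 + cmod z) \<le> Re ((T ^^ n) (\<lambda>_. 1) z)"
      using carath_bounds(3)[OF Tc[OF one_carath] order_refl z1] by blast
    ultimately have "(1 - cmod z) / (1 + cmod z) \<le> Re (G z)"
      by (intro LIMSEQ_le_const) blast+
    moreover have "(1 - cmod z) / (1 + cmod z) > 0" using z1
      by (intro divide_pos_pos) (auto simp: add_pos_nonneg)
    ultimately show ?thesis by linarith
  qed
  have G0: "G 0 = 1"
  proof -
    have "(\<lambda>n. (T ^^ n) (\<lambda>_. 1) 0) \<longlonglongrightarrow> G 0" by (rule pt) (auto simp: unit_disk_def one_carath)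
    moreover have "(\<lambda>n. (T ^^ n) (\<lambda>_. 1) 0) = (\<lambda>n. 1)"
      using Tc[OF one_carath] by (auto simp: caratheodory_def)
    ultimately show ?thesis using LIMSEQ_unique tendsto_const by metis
  qed
  show GP: "G \<in> caratheodory" using hol Re_pos G0 by (simp add: caratheodory_def unit_disk_def)
  have phiD: "\<phi> z \<in> unit_disk" if "z \<in> unit_disk" for z
    using st that by (auto simp: schwarz_type_def)
  show "\<forall>z\<in>unit_disk. T_op F \<phi> G z = G z"
  proof
    fix z assume z: "z \<in> unit_disk"
    have "(\<lambda>n. (T ^^ Suc n) (\<lambda>_. 1) z) \<longlonglongrightarrow> G z"
      using pt[OF z one_carath] by (rule LIMSEQ_Suc)
    moreover have "(\<lambda>n. (T ^^ Suc n) (\<lambda>_. 1) z) = (\<lambda>n. F z * (T ^^ n) (\<lambda>_. 1) (\<phi> z))"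
      by (simp add: T_def T_op_def)
    moreover have "(\<lambda>n. F z * (T ^^ n) (\<lambda>_. 1) (\<phi> z)) \<longlonglongrightarrow> F z * G (\<phi> z)"
      by (intro tendsto_mult tendsto_const pt phiD z one_carath)
    ultimately have "G z = F z * G (\<phi> z)" using LIMSEQ_unique by metis
    then show "T_op F \<phi> G z = G z" by (simp add: T_op_def)
  qed
  show "\<forall>H\<in>caratheodory. (\<forall>z\<in>unit_disk. T_op F \<phi> H z = H z) \<longrightarrow> (\<forall>z\<in>unit_disk. H z = G z)"
  proof (intro ballI impI)
    fix H z assume H: "H \<in> caratheodory" and fx: "\<forall>z\<in>unit_disk. T_op F \<phi> H z = H z"
      and z: "z \<in> unit_disk"
    have iter: "\<forall>z\<in>unit_disk. (T ^^ n) H z = H z" for n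
    proof (induction n)
      case 0 then show ?case by simp
    next
      case (Suc n)
      show ?case
      proof
        fix z assume z: "z \<in> unit_disk"
        have "(T ^^ Suc n) H z = F z * (T ^^ n) H (\<phi> z)" by (simp add: T_def T_op_def)
        also have "\<dots> = F z * H (\<phi> z)" using Suc phiD[OF z] by simp
        also have "\<dots> = H z" using fx z by (simp add: T_op_def)
        finally show "(T ^^ Suc n) H z = H z" .
      qed
    qed
    have "(\<lambda>n. (T ^^ n) H z) \<longlonglongrightarrow> G z" by (rule pt[OF z H])
    moreover have "(\<lambda>n. (T ^^ n) H z) = (\<lambda>n. H z)" using iter z by simp
    ultimately show "H z = G z" using LIMSEQ_unique tendsto_const by metis
  qed
qed

lemma ell_scaled_carath:
  assumes c: "cmod c \<le> 1"
  shows "(\<lambda>u. ell (c * u)) \<in> caratheodory"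
proof -
  have lt: "cmod (c * u) < 1" if "cmod u < 1" for u
  proof -
    have "cmod c * cmod u \<le> 1 * cmod u" using c by (intro mult_right_mono) auto
    then show ?thesis using that by (simp add: norm_mult)
  qed
  have nz: "1 - c * u \<noteq> 0" if "cmod u < 1" for u
    using lt[OF that] by auto
  have "(\<lambda>u. (1 + c * u) / (1 - c * u)) holomorphic_on ball 0 1"
    using nz by (auto intro!: holomorphic_intros)
  moreover have "Re (ell (c * u)) > 0" if "cmod u < 1" for u
  proof -
    have "(cmod (c * u))^2 < 1" using lt[OF that] by (simp add: power_less_one_iff abs_square_less_1)
    moreover have "cmod (1 - c * u) > 0" using nz[OF that] by simp
    ultimately show ?thesis by (simp add: ell_Re)
  qed
  ultimately show ?thesis by (auto simp: caratheodory_def unit_disk_def ell_def)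
qed

lemma Re_mult_ell_it:
  fixes t :: real
  shows "Re (A * ell (of_real t * \<i>)) = ((1 - t^2) * Re A - 2 * t * Im A) / (1 + t^2)"
proof -
  have n: "(cmod (1 - of_real t * \<i>))^2 = 1 + t^2" by (simp add: cmod_power2)
  have R: "Re (ell (of_real t * \<i>)) = (1 - t^2) / (1 + t^2)"
    unfolding ell_Re n by (simp add: norm_mult)
  have I: "Im (ell (of_real t * \<i>)) = 2 * t / (1 + t^2)"
    unfolding ell_Im n by simp
  have "Re (A * ell (of_real t * \<i>)) = Re A * Re (ell (of_real t * \<i>)) - Im A * Im (ell (of_real t * \<i>))"
    by simp
  also have "\<dots> = ((1 - t^2) * Re A - 2 * t * Im A) / (1 + t^2)"
    unfolding R I by (simp add: diff_divide_distrib add_divide_distrib algebra_simps)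
  finally show ?thesis .
qed

lemma Im_omega_bound:
  assumes st\<omega>: "schwarz_type \<omega>" and stp: "schwarz_type \<phi>"
    and TP: "\<forall>f\<in>caratheodory. T_op (ell \<circ> \<omega>) \<phi> f \<in> caratheodory"
    and z: "z \<in> unit_disk" and nz: "\<phi> z \<noteq> 0"
  shows "4 * cmod (\<phi> z) * \<bar>Im (\<omega> z)\<bar> \<le> 1 - (cmod (\<phi> z))^2"
proof -
  define a where "a = \<phi> z"
  define \<rho> where "\<rho> = cmod a"
  have "\<phi> z \<in> ball 0 1" using stp z unfolding schwarz_type_def unit_disk_def by (auto simp: image_subset_iff)
  then have \<rho>: "0 < \<rho>" "\<rho> < 1" using nz by (auto simp: \<rho>_def a_def)
  define A where "A = ell (\<omega> z)"
  have key: "(1 - t^2) * Re A - 2 * t * Im A > 0" if t: "\<bar>t\<bar> = \<rho>" for t :: real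
  proof -
    define c where "c = of_real t * \<i> * cnj a / of_real (\<rho>^2)"
    have cn: "cmod c = 1" using t \<rho> by (simp add: c_def norm_mult norm_divide \<rho>_def power2_eq_square)
    have ca: "c * a = of_real t * \<i>"
    proof -
      have "cnj a * a = of_real (\<rho>^2)" using complex_norm_square[of a] by (simp add: \<rho>_def mult.commute)
      then show ?thesis using \<rho> by (simp add: c_def field_simps)
    qed
    have "(\<lambda>u. ell (c * u)) \<in> caratheodory" using cn by (intro ell_scaled_carath) simp
    with TP have "T_op (ell \<circ> \<omega>) \<phi> (\<lambda>u. ell (c * u)) \<in> caratheodory" by blast
    then have "Re (T_op (ell \<circ> \<omega>) \<phi> (\<lambda>u. ell (c * u)) z) > 0"
      using z by (simp add: caratheodory_def)
    then have "Re (A * ell (of_real t * \<i>)) > 0"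
      by (simp add: T_op_def A_def a_def[symmetric] ca)
    moreover have p: "1 + t^2 > 0" using zero_le_power2[of t] by linarith
    ultimately show ?thesis unfolding Re_mult_ell_it
      by (auto simp: zero_less_divide_iff)
  qed
  have k1: "(1 - \<rho>^2) * Re A - 2 * \<rho> * Im A > 0" using key[of \<rho>] \<rho> by simp
  have k2: "(1 - \<rho>^2) * Re A + 2 * \<rho> * Im A > 0" using key[of "-\<rho>"] \<rho> by simp
  define v where "v = \<omega> z"
  have "\<omega> z \<in> ball 0 1" using st\<omega> z unfolding schwarz_type_def unit_disk_def by (auto simp: image_subset_iff)
  then have v1: "cmod v < 1" by (simp add: v_def)
  have dpos: "(cmod (1 - v))^2 > 0" using v1 by auto
  have ReA: "Re A = (1 - (cmod v)^2) / (cmod (1 - v))^2" by (simp add: A_def v_def ell_Re)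
  have ImA: "Im A = 2 * Im v / (cmod (1 - v))^2" by (simp add: A_def v_def ell_Im)
  have "2 * \<rho> * \<bar>Im A\<bar> < (1 - \<rho>^2) * Re A" using k1 k2 by (cases "Im A \<ge> 0") (auto simp: abs_if)
  then have "2 * \<rho> * (2 * \<bar>Im v\<bar>) < (1 - \<rho>^2) * (1 - (cmod v)^2)"
    using dpos unfolding ReA ImA by (simp add: abs_divide divide_simps mult.assoc)
  also have "\<dots> \<le> (1 - \<rho>^2) * 1"
    using \<rho> by (intro mult_left_mono) (auto simp: power_le_one)
  finally show ?thesis by (simp add: \<rho>_def a_def v_def)
qed

lemma radial_Im_to_0:
  assumes st\<omega>: "schwarz_type \<omega>" and stp: "schwarz_type \<phi>"
    and TP: "\<forall>f\<in>caratheodory. T_op (ell \<circ> \<omega>) \<phi> f \<in> caratheodory"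
    and lim: "((\<lambda>r::real. \<phi> (complex_of_real r * cis \<theta>)) \<longlongrightarrow> L) (at_left 1)" and L: "norm L = 1"
    and r: "\<And>k. 0 < r k \<and> r k < 1" and r1: "r \<longlonglongrightarrow> 1"
  shows "(\<lambda>k. (Im (\<omega> (complex_of_real (r k) * cis \<theta>)))^2) \<longlonglongrightarrow> 0"
proof -
  define z where "z = (\<lambda>k. complex_of_real (r k) * cis \<theta>)"
  have zD: "z k \<in> unit_disk" for k using r[of k] by (simp add: z_def unit_disk_def norm_mult)
  have rl: "filterlim r (at_left 1) sequentially"
    using r r1 by (intro tendsto_imp_filterlim_at_left) auto
  have plim: "(\<lambda>k. \<phi> (z k)) \<longlonglongrightarrow> L"
    unfolding z_def using filterlim_compose[OF lim rl] .
  then have rho: "(\<lambda>k. cmod (\<phi> (z k))) \<longlonglongrightarrow> 1" using L by (metis tendsto_norm)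
  then have glim: "(\<lambda>k. (1 - (cmod (\<phi> (z k)))^2) / (4 * cmod (\<phi> (z k)))) \<longlonglongrightarrow> (1 - 1^2) / (4 * 1)"
    by (intro tendsto_intros) auto
  have pos: "\<forall>\<^sub>F k in sequentially. cmod (\<phi> (z k)) > 0"
    using order_tendstoD(1)[OF rho, of 0] by simp
  have "\<forall>\<^sub>F k in sequentially. norm (Im (\<omega> (z k))) \<le> (1 - (cmod (\<phi> (z k)))^2) / (4 * cmod (\<phi> (z k)))"
  proof (rule eventually_mono[OF pos])
    fix k assume p: "cmod (\<phi> (z k)) > 0"
    then have "\<phi> (z k) \<noteq> 0" by auto
    from Im_omega_bound[OF st\<omega> stp TP zD this]
    have "4 * cmod (\<phi> (z k)) * \<bar>Im (\<omega> (z k))\<bar> \<le> 1 - (cmod (\<phi> (z k)))^2" .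
    then show "norm (Im (\<omega> (z k))) \<le> (1 - (cmod (\<phi> (z k)))^2) / (4 * cmod (\<phi> (z k)))"
      using p by (simp add: pos_le_divide_eq mult.commute mult.left_commute)
  qed
  moreover have "(\<lambda>k. (1 - (cmod (\<phi> (z k)))^2) / (4 * cmod (\<phi> (z k)))) \<longlonglongrightarrow> 0"
    using glim by simp
  ultimately have "(\<lambda>k. Im (\<omega> (z k))) \<longlonglongrightarrow> 0" by (rule Lim_null_comparison)
  then have "(\<lambda>k. (Im (\<omega> (z k)))^2) \<longlonglongrightarrow> 0^2" by (intro tendsto_intros)
  then show ?thesis by (simp add: z_def)
qed

lemma norm_circlepath0: "cmod (circlepath 0 r t) = \<bar>r\<bar>"
  by (simp add: circlepath norm_mult)

lemma circlepath0_nz: "r \<noteq> 0 \<Longrightarrow> circlepath 0 r t \<noteq> 0"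
  using norm_circlepath0[of r t] by auto

lemma cont_circ:
  assumes g: "continuous_on (ball 0 1) g" and r: "0 \<le> r" "r < 1"
  shows "continuous_on {0..1} (\<lambda>t. g (circlepath 0 r t))"
proof (rule continuous_on_compose2[OF g])
  show "continuous_on {0..1} (circlepath 0 r)" using path_circlepath[of 0 r] by (simp add: path_def)
  show "circlepath 0 r ` {0..1} \<subseteq> ball 0 1" using r by (auto simp: norm_circlepath0)
qed

lemma cauchy_param:
  assumes hol: "h holomorphic_on ball 0 1" and r: "0 < r" "r < 1" and w: "cmod w < r"
  shows "((\<lambda>t. h (circlepath 0 r t) * circlepath 0 r t / (circlepath 0 r t - w)) has_integral h w) {0..1}"
proof -
  have sub: "cball 0 r \<subseteq> ball (0::complex) 1" using r by auto
  have "continuous_on (cball 0 r) h"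
    using holomorphic_on_imp_continuous_on[OF hol] sub by (rule continuous_on_subset)
  moreover have "h holomorphic_on ball 0 r" using r by (intro holomorphic_on_subset[OF hol]) auto
  ultimately have "((\<lambda>u. h u / (u - w)) has_contour_integral (2 * of_real pi * \<i> * h w)) (circlepath 0 r)"
    using w by (intro Cauchy_integral_circlepath) auto
  then have I: "((\<lambda>x. h (circlepath 0 r x) / (circlepath 0 r x - w) * vector_derivative (circlepath 0 r) (at x within {0..1}))
      has_integral (2 * of_real pi * \<i> * h w)) {0..1}"
    unfolding has_contour_integral_def .
  have "((\<lambda>x. (2 * of_real pi * \<i>) * (h (circlepath 0 r x) * circlepath 0 r x / (circlepath 0 r x - w)))
      has_integral (2 * of_real pi * \<i> * h w)) {0..1}"
  proof (rule has_integral_eq[OF _ I])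
    fix x :: real assume "x \<in> {0..1}"
    then have "vector_derivative (circlepath 0 r) (at x within {0..1}) = 2 * pi * \<i> * r * exp(2 * of_real pi * \<i> * x)"
      by (intro vector_derivative_circlepath01) auto
    also have "\<dots> = 2 * of_real pi * \<i> * circlepath 0 r x"
      by (simp add: circlepath)
    finally have "vector_derivative (circlepath 0 r) (at x within {0..1}) = 2 * of_real pi * \<i> * circlepath 0 r x" .
    then show "h (circlepath 0 r x) / (circlepath 0 r x - w) * vector_derivative (circlepath 0 r) (at x within {0..1})
       = (2 * of_real pi * \<i>) * (h (circlepath 0 r x) * circlepath 0 r x / (circlepath 0 r x - w))"
      by simp
  qed
  then show ?thesis by (subst (asm) has_integral_mult_right_iff) auto
qed

lemma cmod_sq_eq: "cmod (v^2) = Re (v^2) + 2 * (Im v)^2"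
  by (simp add: norm_power cmod_power2 Re_power2)

lemma omega_circle_bound:
  assumes hol: "\<omega> holomorphic_on ball 0 1" and w0: "\<omega> 0 = 0"
    and r: "0 < r" "r < 1" and w: "cmod w < r"
  shows "(cmod (\<omega> w))^2 \<le> 2 * integral {0..1} (\<lambda>t. (Im (\<omega> (circlepath 0 r t)))^2) * (r / (r - cmod w))"
proof -
  define h where "h = (\<lambda>u. (\<omega> u)^2)"
  define \<gamma> where "\<gamma> = circlepath 0 r"
  define I where "I = integral {0..1} (\<lambda>t. (Im (\<omega> (\<gamma> t)))^2)"
  define C where "C = r / (r - cmod w)"
  have holh: "h holomorphic_on ball 0 1" unfolding h_def using hol by (intro holomorphic_intros)
  have gnz: "\<gamma> t \<noteq> 0" for t using r by (simp add: \<gamma>_def circlepath0_nz)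
  have gn: "cmod (\<gamma> t) = r" for t using r by (simp add: \<gamma>_def norm_circlepath0)
  have A0: "((\<lambda>t. h (\<gamma> t) * \<gamma> t / (\<gamma> t - 0)) has_integral h 0) {0..1}"
    unfolding \<gamma>_def using cauchy_param[OF holh r, of 0] r by simp
  have A: "((\<lambda>t. h (\<gamma> t)) has_integral 0) {0..1}"
    using A0 gnz w0 by (simp add: h_def)
  have ReI: "((\<lambda>t. Re (h (\<gamma> t))) has_integral 0) {0..1}"
    using has_integral_Re[OF A] by simp
  have contw: "continuous_on {0..1} (\<lambda>t. \<omega> (\<gamma> t))"
    unfolding \<gamma>_def using holomorphic_on_imp_continuous_on[OF hol] r by (intro cont_circ) auto
  have intIm: "(\<lambda>t. (Im (\<omega> (\<gamma> t)))^2) integrable_on {0..1}"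
    by (intro integrable_continuous_interval continuous_intros contw)
  then have ImI: "((\<lambda>t. 2 * (Im (\<omega> (\<gamma> t)))^2) has_integral (2 * I)) {0..1}"
    unfolding I_def by (intro has_integral_mult_right) (simp add: has_integral_integral)
  have gI: "((\<lambda>t. (Re (h (\<gamma> t)) + 2 * (Im (\<omega> (\<gamma> t)))^2) * C) has_integral ((0 + 2 * I) * C)) {0..1}"
    by (intro has_integral_mult_left has_integral_add ReI ImI)
  have B: "((\<lambda>t. h (\<gamma> t) * \<gamma> t / (\<gamma> t - w)) has_integral h w) {0..1}"
    unfolding \<gamma>_def using cauchy_param[OF holh r w] .
  have C0: "0 \<le> C" using r w by (simp add: C_def)
  have "norm (integral {0..1} (\<lambda>t. h (\<gamma> t) * \<gamma> t / (\<gamma> t - w)))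
      \<le> integral {0..1} (\<lambda>t. (Re (h (\<gamma> t)) + 2 * (Im (\<omega> (\<gamma> t)))^2) * C)"
  proof (rule integral_norm_bound_integral)
    show "(\<lambda>t. h (\<gamma> t) * \<gamma> t / (\<gamma> t - w)) integrable_on {0..1}" using B by blast
    show "(\<lambda>t. (Re (h (\<gamma> t)) + 2 * (Im (\<omega> (\<gamma> t)))^2) * C) integrable_on {0..1}" using gI by blast
    fix t :: real assume "t \<in> {0..1}"
    have d: "r - cmod w \<le> cmod (\<gamma> t - w)" using norm_triangle_ineq2[of "\<gamma> t" w] gn[of t] by simp
    have dpos: "0 < r - cmod w" using w by simp
    have "norm (h (\<gamma> t) * \<gamma> t / (\<gamma> t - w)) = cmod (h (\<gamma> t)) * (r / cmod (\<gamma> t - w))"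
      by (simp add: norm_mult norm_divide gn)
    also have "\<dots> \<le> cmod (h (\<gamma> t)) * C"
    proof -
      have "0 < cmod (\<gamma> t - w)" using d dpos by linarith
      then have "0 < cmod (\<gamma> t - w) * (r - cmod w)" using dpos by simp
      then show ?thesis unfolding C_def using d dpos r by (intro mult_left_mono divide_left_mono) auto
    qed
    also have "cmod (h (\<gamma> t)) = Re (h (\<gamma> t)) + 2 * (Im (\<omega> (\<gamma> t)))^2"
      by (simp add: h_def cmod_sq_eq)
    finally show "norm (h (\<gamma> t) * \<gamma> t / (\<gamma> t - w)) \<le> (Re (h (\<gamma> t)) + 2 * (Im (\<omega> (\<gamma> t)))^2) * C" .
  qed
  also have "\<dots> = 2 * I * C" using integral_unique[OF gI] by simp
  finally have "norm (h w) \<le> 2 * I * C" using B by (simp add: integral_unique)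
  then show ?thesis by (simp add: h_def norm_power I_def C_def \<gamma>_def)
qed

lemma circlepath0_cis: "circlepath 0 r t = complex_of_real r * cis (2 * pi * t)"
  by (simp add: circlepath cis_conv_exp mult_ac)

lemma inner_omega_zero:
  assumes st\<omega>: "schwarz_type \<omega>" and stp: "schwarz_type \<phi>"
    and TP: "\<forall>f\<in>caratheodory. T_op (ell \<circ> \<omega>) \<phi> f \<in> caratheodory"
    and inner: "inner_function \<phi>"
  shows "\<forall>w\<in>unit_disk. \<omega> w = 0"
proof -
  define P where "P = (\<lambda>\<theta>. \<theta> \<in> {0..2*pi} \<longrightarrow>
        (\<exists>L. ((\<lambda>r::real. \<phi> (complex_of_real r * cis \<theta>)) \<longlongrightarrow> L) (at_left 1) \<and> norm L = 1))"
  have "AE \<theta> in lborel. P \<theta>" using inner unfolding inner_function_def P_def by blast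
  then obtain N where N: "{\<theta> \<in> space lborel. \<not> P \<theta>} \<subseteq> N" "emeasure lborel N = 0" "N \<in> sets lborel"
    by (rule AE_E)
  have "N \<in> null_sets lebesgue" using N by (intro null_sets_completionI null_setsI)
  then have negN: "negligible N" by (simp add: negligible_iff_null_sets)
  define N' where "N' = (\<lambda>\<theta>. \<theta> / (2 * pi)) ` N"
  have negN': "negligible N'" unfolding N'_def
  proof (rule negligible_differentiable_image_negligible[OF _ negN])
    show "(\<lambda>\<theta>. \<theta> / (2 * pi)) differentiable_on N"
      unfolding differentiable_on_def differentiable_def
    proof
      fix x
      have "((\<lambda>\<theta>::real. \<theta> / (2 * pi)) has_derivative (\<lambda>h. h / (2 * pi))) (at x within N)"
        by (auto intro!: derivative_eq_intros)
      then show "\<exists>D. ((\<lambda>\<theta>. \<theta> / (2 * pi)) has_derivative D) (at x within N)" by blast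
    qed
  qed simp
  define S where "S = {0..1} - N'"
  have neg1: "negligible ({0..1} - S)" unfolding S_def by (rule negligible_subset[OF negN']) auto
  define r where "r = (\<lambda>k::nat. 1 - (1/2::real) ^ Suc k)"
  have r01: "0 < r k \<and> r k < 1" for k
  proof -
    have "(1/2::real) ^ Suc k \<le> 1/2" by (simp add: power_le_one)
    moreover have "(1/2::real) ^ Suc k > 0" by simp
    ultimately show ?thesis by (simp add: r_def)
  qed
  have r1: "r \<longlonglongrightarrow> 1"
  proof -
    have "(\<lambda>k. (1/2::real) ^ Suc k) \<longlonglongrightarrow> 0"
      using LIMSEQ_Suc[OF LIMSEQ_realpow_zero[of "1/2::real"]] by simp
    then have "(\<lambda>k. 1 - (1/2::real) ^ Suc k) \<longlonglongrightarrow> 1 - 0" by (intro tendsto_intros)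
    then show ?thesis by (simp add: r_def)
  qed
  have hol: "\<omega> holomorphic_on ball 0 1" and w0: "\<omega> 0 = 0"
    using st\<omega> by (auto simp: schwarz_type_def unit_disk_def)
  have \<omega>D: "cmod (\<omega> u) < 1" if "cmod u < 1" for u
    using st\<omega> that unfolding schwarz_type_def unit_disk_def by (auto simp: image_subset_iff)
  define f where "f = (\<lambda>k t. (Im (\<omega> (circlepath 0 (r k) t)))^2)"
  have intf01: "f k integrable_on {0..1}" for k
  proof -
    have "continuous_on {0..1} (\<lambda>t. \<omega> (circlepath 0 (r k) t))"
      using holomorphic_on_imp_continuous_on[OF hol] r01[of k] by (intro cont_circ) auto
    then show ?thesis unfolding f_def by (intro integrable_continuous_interval continuous_intros)
  qed
  have eqS: "integral {0..1} g = integral S g" and intS: "g integrable_on {0..1} \<Longrightarrow> g integrable_on S"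
    for g :: "real \<Rightarrow> real"
  proof -
    have a: "negligible {x \<in> {0..1} - S. g x \<noteq> 0}" by (rule negligible_subset[OF neg1]) auto
    have "{x \<in> S - {0..1}. g x \<noteq> 0} = {}" by (auto simp: S_def)
    then have b: "negligible {x \<in> S - {0..1}. g x \<noteq> 0}" by (metis negligible_empty)
    show "integral {0..1} g = integral S g" by (rule integral_spike_set[OF a b])
    show "g integrable_on S" if "g integrable_on {0..1}" by (rule integrable_spike_set[OF that a b])
  qed
  have conv: "(\<lambda>k. f k t) \<longlonglongrightarrow> 0" if t: "t \<in> S" for t
  proof -
    define \<theta> where "\<theta> = 2 * pi * t"
    have t01: "t \<in> {0..1}" and tN: "t \<notin> N'" using t by (auto simp: S_def)
    have "\<theta> \<notin> N"
    proof
      assume "\<theta> \<in> N"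
      then have "\<theta> / (2 * pi) \<in> N'" unfolding N'_def by blast
      then show False using tN by (simp add: \<theta>_def)
    qed
    then have "P \<theta>" using N(1) by auto
    moreover have "\<theta> \<in> {0..2*pi}" using t01 by (auto simp: \<theta>_def)
    ultimately obtain L where L: "((\<lambda>r::real. \<phi> (complex_of_real r * cis \<theta>)) \<longlongrightarrow> L) (at_left 1)" "norm L = 1"
      unfolding P_def by blast
    from radial_Im_to_0[OF st\<omega> stp TP L r01 r1]
    show ?thesis by (simp add: f_def circlepath0_cis \<theta>_def)
  qed
  have Ilim: "(\<lambda>k. integral {0..1} (f k)) \<longlonglongrightarrow> 0"
  proof -
    have "(\<lambda>k. integral S (f k)) \<longlonglongrightarrow> integral S (\<lambda>_. 0::real)"
    proof (rule dominated_convergence(2))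
      show "f k integrable_on S" for k by (rule intS[OF intf01])
      show "(\<lambda>_. 1::real) integrable_on S" by (rule intS) (rule integrable_const_ivl)
      show "norm (f k t) \<le> 1" if "t \<in> S" for k t
      proof -
        have "cmod (circlepath 0 (r k) t) < 1" using r01[of k] by (simp add: norm_circlepath0)
        then have "cmod (\<omega> (circlepath 0 (r k) t)) < 1" by (rule \<omega>D)
        moreover have "\<bar>Im (\<omega> (circlepath 0 (r k) t))\<bar> \<le> cmod (\<omega> (circlepath 0 (r k) t))" by (rule abs_Im_le_cmod)
        ultimately have "\<bar>Im (\<omega> (circlepath 0 (r k) t))\<bar> \<le> 1" by simp
        then have "(Im (\<omega> (circlepath 0 (r k) t)))^2 \<le> 1" by (simp add: abs_le_square_iff power_le_one_iff abs_square_le_1)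
        then show ?thesis by (simp add: f_def)
      qed
      show "(\<lambda>k. f k t) \<longlonglongrightarrow> 0" if "t \<in> S" for t by (rule conv[OF that])
    qed
    then show ?thesis using eqS by simp
  qed
  show ?thesis
  proof
    fix w assume "w \<in> unit_disk"
    then have w1: "cmod w < 1" by (simp add: unit_disk_def)
    have ev: "\<forall>\<^sub>F k in sequentially. r k > cmod w" using order_tendstoD(1)[OF r1 w1] .
    have bnd: "\<forall>\<^sub>F k in sequentially. (cmod (\<omega> w))^2 \<le> 2 * integral {0..1} (f k) * (r k / (r k - cmod w))"
    proof (rule eventually_mono[OF ev])
      fix k assume "cmod w < r k"
      from omega_circle_bound[OF hol w0 _ _ this] r01[of k]
      show "(cmod (\<omega> w))^2 \<le> 2 * integral {0..1} (f k) * (r k / (r k - cmod w))"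
        by (simp add: f_def)
    qed
    have "(\<lambda>k. 2 * integral {0..1} (f k) * (r k / (r k - cmod w))) \<longlonglongrightarrow> 2 * 0 * (1 / (1 - cmod w))"
      using w1 by (intro tendsto_intros Ilim r1) auto
    then have "(cmod (\<omega> w))^2 \<le> 2 * 0 * (1 / (1 - cmod w))"
      using bnd by (intro tendsto_le[OF _ _ tendsto_const]) auto
    then show "\<omega> w = 0" by simp
  qed
qed

theorem theorem4p1:
  fixes \<phi> \<omega> :: "complex \<Rightarrow> complex"
  assumes "schwarz_type \<phi>" and "schwarz_type \<omega>"
    and "\<forall>f\<in>caratheodory. T_op (ell \<circ> \<omega>) \<phi> f \<in> caratheodory"
    and "\<not> is_rotation \<phi>"
  shows "\<exists>G\<in>caratheodory.
           (\<forall>z\<in>unit_disk. T_op (ell \<circ> \<omega>) \<phi> G z = G z)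
         \<and> (\<forall>H\<in>caratheodory. (\<forall>z\<in>unit_disk. T_op (ell \<circ> \<omega>) \<phi> H z = H z) \<longrightarrow> (\<forall>z\<in>unit_disk. H z = G z))
         \<and> (\<forall>f\<in>caratheodory. \<forall>K. compact K \<and> K \<subseteq> unit_disk \<longrightarrow>
              uniform_limit K (\<lambda>n. (T_op (ell \<circ> \<omega>) \<phi> ^^ n) f) G sequentially)
         \<and> (inner_function \<phi> \<longrightarrow> (\<forall>z\<in>unit_disk. G z = 1))"
proof -
  define T where "T = T_op (ell \<circ> \<omega>) \<phi>"
  define G where "G = (\<lambda>z. lim (\<lambda>m. (T ^^ m) (\<lambda>_. 1) z))"
  note mp = main_part[OF assms(3) assms(1) assms(4)]
  have inn: "\<forall>z\<in>unit_disk. G z = 1" if inner: "inner_function \<phi>"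
  proof
    fix z assume z: "z \<in> unit_disk"
    have w0: "\<forall>w\<in>unit_disk. \<omega> w = 0" by (rule inner_omega_zero[OF assms(2) assms(1) assms(3) inner])
    have phiD: "\<phi> u \<in> unit_disk" if "u \<in> unit_disk" for u
      using assms(1) that by (auto simp: schwarz_type_def)
    have it: "\<forall>u\<in>unit_disk. (T ^^ n) (\<lambda>_. 1) u = 1" for n
    proof (induction n)
      case 0 then show ?case by simp
    next
      case (Suc n)
      show ?case
      proof
        fix u assume u: "u \<in> unit_disk"
        have "(T ^^ Suc n) (\<lambda>_. 1) u = ell (\<omega> u) * (T ^^ n) (\<lambda>_. 1) (\<phi> u)"
          by (simp add: T_def T_op_def)
        also have "\<dots> = 1" using Suc phiD[OF u] w0 u by (simp add: ell_def)
        finally show "(T ^^ Suc n) (\<lambda>_. 1) u = 1" .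
      qed
    qed
    have "(\<lambda>m. (T ^^ m) (\<lambda>_. 1) z) = (\<lambda>_. 1)" using it z by simp
    then show "G z = 1" by (simp add: G_def lim_const)
  qed
  have m1: "G \<in> caratheodory" using mp(1) unfolding G_def T_def .
  have m2: "\<forall>z\<in>unit_disk. T_op (ell \<circ> \<omega>) \<phi> G z = G z" using mp(2) unfolding G_def T_def .
  have m3: "\<forall>H\<in>caratheodory. (\<forall>z\<in>unit_disk. T_op (ell \<circ> \<omega>) \<phi> H z = H z) \<longrightarrow> (\<forall>z\<in>unit_disk. H z = G z)"
    using mp(3) unfolding G_def T_def .
  have m4: "\<forall>f\<in>caratheodory. \<forall>K. compact K \<and> K \<subseteq> unit_disk \<longrightarrow>
              uniform_limit K (\<lambda>n. (T_op (ell \<circ> \<omega>) \<phi> ^^ n) f) G sequentially"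
    using mp(4) unfolding G_def T_def .
  show ?thesis
  proof (rule bexI[where x = G])
    show "G \<in> caratheodory" by (rule m1)
    show "(\<forall>z\<in>unit_disk. T_op (ell \<circ> \<omega>) \<phi> G z = G z)
         \<and> (\<forall>H\<in>caratheodory. (\<forall>z\<in>unit_disk. T_op (ell \<circ> \<omega>) \<phi> H z = H z) \<longrightarrow> (\<forall>z\<in>unit_disk. H z = G z))
         \<and> (\<forall>f\<in>caratheodory. \<forall>K. compact K \<and> K \<subseteq> unit_disk \<longrightarrow>
              uniform_limit K (\<lambda>n. (T_op (ell \<circ> \<omega>) \<phi> ^^ n) f) G sequentially)
         \<and> (inner_function \<phi> \<longrightarrow> (\<forall>z\<in>unit_disk. G z = 1))"
      using m2 m3 m4 inn by (intro conjI impI) assumption+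
  qed
qed

end
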